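(* Suppose $M$ is a matroid. If $\mathrm{si}(M)$ is rigid, then $M$ is rigid.
   Context: $\mathrm{si}(M)$, the simplification of $M$, is the matroid obtained from $M$ by deleting all loops and restricting to one element from each parallel class. For a matroid $N$ on a finite set $E$ of rank $d$: a valuation of $N$ is a function $\nu:\binom{E}{d}\to\mathbb{R}\cup\{\infty\}$ satisfying (V1) $\nu(B)<\infty$ for some $B$, (V2) for all $d$-sets $B,B'$ and $i\in B\setminus B'$ there is $j\in B'\setminus B$ with $\nu(B)+\nu(B')\ge\nu(B-i+j)+\nu(B'+i-j)$ (where $B-i+j:=(B\cup\{j\})\setminus\{i\}$), and such that $\{B:\nu(B)<\infty\}$ is exactly the set of bases of $N$. A valuation $\nu$ is trivial if there is $\alpha\in\mathbb{R}^E$ with $\nu(B)=\sum_{i\in B}\alpha_i$ for all bases $B$ of $N$. $N$ is rigid if all valuations of $N$ are trivial. *)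

theory Defs
  imports "HOL-Library.Extended_Real"
begin

definition matroid :: "'a set \<Rightarrow> 'a set set \<Rightarrow> bool" where
  "matroid E \<B> \<longleftrightarrow> finite E \<and> \<B> \<noteq> {} \<and> (\<forall>B\<in>\<B>. B \<subseteq> E) \<and>
     (\<forall>B1\<in>\<B>. \<forall>B2\<in>\<B>. \<forall>x\<in>B1 - B2. \<exists>y\<in>B2 - B1. insert y (B1 - {x}) \<in> \<B>)"

definition indep :: "'a set set \<Rightarrow> 'a set \<Rightarrow> bool" where
  "indep \<B> I \<longleftrightarrow> (\<exists>B\<in>\<B>. I \<subseteq> B)"

definition restrict_bases :: "'a set set \<Rightarrow> 'a set \<Rightarrow> 'a set set" where
  "restrict_bases \<B> S = {I. I \<subseteq> S \<and> indep \<B> I \<and> (\<forall>J. I \<subset> J \<and> J \<subseteq> S \<longrightarrow> \<not> indep \<B> J)}"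

definition mrank :: "'a set set \<Rightarrow> nat" where
  "mrank \<B> = card (SOME B. B \<in> \<B>)"

definition is_loop :: "'a set \<Rightarrow> 'a set set \<Rightarrow> 'a \<Rightarrow> bool" where
  "is_loop E \<B> e \<longleftrightarrow> e \<in> E \<and> \<not> indep \<B> {e}"

definition parallel :: "'a set \<Rightarrow> 'a set set \<Rightarrow> 'a \<Rightarrow> 'a \<Rightarrow> bool" where
  "parallel E \<B> e f \<longleftrightarrow> e \<in> E \<and> f \<in> E \<and> \<not> is_loop E \<B> e \<and> \<not> is_loop E \<B> f \<and>
     (e = f \<or> \<not> indep \<B> {e, f})"

text \<open>S is a set obtained by deleting all loops and keeping exactly one element
  of each parallel class; si(M) is then the restriction M|S.\<close>
definition simplification_set :: "'a set \<Rightarrow> 'a set set \<Rightarrow> 'a set \<Rightarrow> bool" where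
  "simplification_set E \<B> S \<longleftrightarrow> S \<subseteq> E \<and> (\<forall>e\<in>S. \<not> is_loop E \<B> e) \<and>
     (\<forall>e\<in>S. \<forall>f\<in>S. parallel E \<B> e f \<longrightarrow> e = f) \<and>
     (\<forall>e\<in>E. \<not> is_loop E \<B> e \<longrightarrow> (\<exists>f\<in>S. parallel E \<B> e f))"

text \<open>Valuations with values in R \<union> {\<infinity>} (ereal without -\<infinity>), defined on the d-subsets of E.\<close>
definition valuation :: "'a set \<Rightarrow> 'a set set \<Rightarrow> ('a set \<Rightarrow> ereal) \<Rightarrow> bool" where
  "valuation E \<B> \<nu> \<longleftrightarrow> (let d = mrank \<B> in
     (\<forall>B. B \<subseteq> E \<and> card B = d \<longrightarrow> \<nu> B \<noteq> -\<infinity>) \<and>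
     (\<exists>B. B \<subseteq> E \<and> card B = d \<and> \<nu> B < \<infinity>) \<and>
     (\<forall>B B'. B \<subseteq> E \<and> card B = d \<and> B' \<subseteq> E \<and> card B' = d \<longrightarrow>
        (\<forall>i\<in>B - B'. \<exists>j\<in>B' - B.
           \<nu> B + \<nu> B' \<ge> \<nu> (insert j (B - {i})) + \<nu> (insert i (B' - {j})))) \<and>
     (\<forall>B. B \<subseteq> E \<and> card B = d \<longrightarrow> (\<nu> B < \<infinity> \<longleftrightarrow> B \<in> \<B>)))"

definition trivial_valuation :: "'a set set \<Rightarrow> ('a set \<Rightarrow> ereal) \<Rightarrow> bool" where
  "trivial_valuation \<B> \<nu> \<longleftrightarrow> (\<exists>\<alpha> :: 'a \<Rightarrow> real. \<forall>B\<in>\<B>. \<nu> B = ereal (\<Sum>i\<in>B. \<alpha> i))"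

definition rigid :: "'a set \<Rightarrow> 'a set set \<Rightarrow> bool" where
  "rigid E \<B> \<longleftrightarrow> (\<forall>\<nu>. valuation E \<B> \<nu> \<longrightarrow> trivial_valuation \<B> \<nu>)"

end

theory Submission
  imports Defs
begin

locale vm =
  fixes E :: "'a set" and BB :: "'a set set" and nu :: "'a set \<Rightarrow> ereal"
  assumes mat: "matroid E BB" and val: "valuation E BB nu"
begin

lemma finE: "finite E" using mat by (simp add: matroid_def)
lemma subE: "B \<in> BB \<Longrightarrow> B \<subseteq> E" using mat by (auto simp: matroid_def)
lemma finB: "B \<in> BB \<Longrightarrow> finite B" using subE finE finite_subset by blast
lemma exch: "B1 \<in> BB \<Longrightarrow> B2 \<in> BB \<Longrightarrow> x \<in> B1 - B2 \<Longrightarrow> \<exists>y\<in>B2 - B1. insert y (B1 - {x}) \<in> BB"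
  using mat unfolding matroid_def by blast
lemma nonemp: "BB \<noteq> {}" using mat by (simp add: matroid_def)

lemma card_swap: "finite B \<Longrightarrow> x \<in> B \<Longrightarrow> y \<notin> B \<Longrightarrow> card (insert y (B - {x})) = card B"
  by (metis card_Suc_Diff1 card_insert_disjoint finite_Diff insert_Diff insert_iff)

lemma equicard_aux: "\<forall>B1 B2. B1 \<in> BB \<longrightarrow> B2 \<in> BB \<longrightarrow> card (B1 - B2) = n \<longrightarrow> card B1 = card B2"
proof (induction n)
  case 0
  show ?case
  proof (intro allI impI)
    fix B1 B2 assume h: "B1 \<in> BB" "B2 \<in> BB" "card (B1 - B2) = 0"
    have fin: "finite B1" "finite B2" using h finB by blast+
    hence s: "B1 \<subseteq> B2" using h by auto
    moreover have "B2 \<subseteq> B1"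
    proof (rule ccontr)
      assume "\<not> B2 \<subseteq> B1" then obtain x where "x \<in> B2 - B1" by auto
      with exch[OF h(2) h(1) this] s show False by auto
    qed
    ultimately show "card B1 = card B2" by simp
  qed
next
  case (Suc n)
  show ?case
  proof (intro allI impI)
    fix B1 B2 assume h: "B1 \<in> BB" "B2 \<in> BB" "card (B1 - B2) = Suc n"
    have fin: "finite B1" "finite B2" using h finB by blast+
    obtain x where x: "x \<in> B1 - B2" using h(3) by (metis card.empty ex_in_conv nat.distinct(1))
    obtain y where y: "y \<in> B2 - B1" "insert y (B1 - {x}) \<in> BB" using exch[OF h(1,2) x] by auto
    have "insert y (B1 - {x}) - B2 = (B1 - B2) - {x}" using x y by auto
    hence "card (insert y (B1 - {x}) - B2) = n" using h(3) x fin by simp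
    hence "card (insert y (B1 - {x})) = card B2" using Suc.IH y(2) h(2) by blast
    moreover have "card (insert y (B1 - {x})) = card B1" using card_swap[of B1 x y] x y fin(1) by blast
    ultimately show "card B1 = card B2" by simp
  qed
qed

lemma equicard: "B1 \<in> BB \<Longrightarrow> B2 \<in> BB \<Longrightarrow> card B1 = card B2"
  using equicard_aux by blast

definition d where "d = mrank BB"

lemma base_card: "B \<in> BB \<Longrightarrow> card B = d"
proof -
  assume b: "B \<in> BB"
  have "(SOME B. B \<in> BB) \<in> BB" using nonemp by (simp add: some_in_eq)
  thus ?thesis unfolding d_def mrank_def using equicard[OF b] by simp
qed

lemma valparts: "(\<forall>B. B \<subseteq> E \<and> card B = d \<longrightarrow> nu B \<noteq> -\<infinity>) \<and>
     (\<exists>B. B \<subseteq> E \<and> card B = d \<and> nu B < \<infinity>) \<and>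
     (\<forall>B B'. B \<subseteq> E \<and> card B = d \<and> B' \<subseteq> E \<and> card B' = d \<longrightarrow>
        (\<forall>i\<in>B - B'. \<exists>j\<in>B' - B.
           nu B + nu B' \<ge> nu (insert j (B - {i})) + nu (insert i (B' - {j})))) \<and>
     (\<forall>B. B \<subseteq> E \<and> card B = d \<longrightarrow> (nu B < \<infinity> \<longleftrightarrow> B \<in> BB))"
  using val unfolding valuation_def Let_def d_def by assumption

lemma v_notminf: "B \<subseteq> E \<Longrightarrow> card B = d \<Longrightarrow> nu B \<noteq> -\<infinity>"
  using conjunct1[OF valparts] by blast
lemma v_fin: "B \<subseteq> E \<Longrightarrow> card B = d \<Longrightarrow> (nu B < \<infinity> \<longleftrightarrow> B \<in> BB)"
  using conjunct2[OF conjunct2[OF conjunct2[OF valparts]]] by blast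
lemma v_exch: "B \<subseteq> E \<Longrightarrow> card B = d \<Longrightarrow> B' \<subseteq> E \<Longrightarrow> card B' = d \<Longrightarrow> i \<in> B - B' \<Longrightarrow>
   \<exists>j\<in>B' - B. nu B + nu B' \<ge> nu (insert j (B - {i})) + nu (insert i (B' - {j}))"
  using conjunct1[OF conjunct2[OF conjunct2[OF valparts]]] by blast

lemma base_real: "B \<in> BB \<Longrightarrow> nu B = ereal (real_of_ereal (nu B))"
proof -
  assume b: "B \<in> BB"
  have "nu B < \<infinity>" using v_fin[OF subE[OF b] base_card[OF b]] b by simp
  moreover have "nu B \<noteq> -\<infinity>" using v_notminf[OF subE[OF b] base_card[OF b]] .
  ultimately
  show ?thesis by (cases "nu B") auto
qed

lemma SE:
  assumes b1: "B1 \<in> BB" and b2: "B2 \<in> BB" and i: "i \<in> B1 - B2"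
  shows "\<exists>j\<in>B2 - B1. insert j (B1 - {i}) \<in> BB \<and> insert i (B2 - {j}) \<in> BB \<and>
     nu (insert j (B1 - {i})) + nu (insert i (B2 - {j})) \<le> nu B1 + nu B2"
proof -
  obtain j where j: "j \<in> B2 - B1" and le: "nu B1 + nu B2 \<ge> nu (insert j (B1 - {i})) + nu (insert i (B2 - {j}))"
    using v_exch[OF subE[OF b1] base_card[OF b1] subE[OF b2] base_card[OF b2] i] by blast
  let ?C1 = "insert j (B1 - {i})" and ?C2 = "insert i (B2 - {j})"
  have c1: "?C1 \<subseteq> E" "card ?C1 = d" using subE[OF b1] subE[OF b2] j i card_swap[OF finB[OF b1]] base_card[OF b1] by auto
  have c2: "?C2 \<subseteq> E" "card ?C2 = d" using subE[OF b1] subE[OF b2] j i card_swap[OF finB[OF b2]] base_card[OF b2] by auto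
  obtain r1 where r1: "nu B1 = ereal r1" using base_real[OF b1] by blast
  obtain r2 where r2: "nu B2 = ereal r2" using base_real[OF b2] by blast
  have f: "nu B1 + nu B2 < \<infinity>" unfolding r1 r2 by simp
  have m1: "nu ?C1 \<noteq> -\<infinity>" using v_notminf c1 by blast
  have m2: "nu ?C2 \<noteq> -\<infinity>" using v_notminf c2 by blast
  have s: "nu ?C1 + nu ?C2 < \<infinity>" using le_less_trans[OF le f] .
  have "nu ?C1 < \<infinity>"
  proof (rule ccontr)
    assume "\<not> nu ?C1 < \<infinity>"
    hence "nu ?C1 = \<infinity>" by simp
    hence "nu ?C1 + nu ?C2 = \<infinity>" using m2 by simp
    thus False using s by simp
  qed
  moreover have "nu ?C2 < \<infinity>"
  proof (rule ccontr)
    assume "\<not> nu ?C2 < \<infinity>"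
    hence "nu ?C2 = \<infinity>" by simp
    hence "nu ?C1 + nu ?C2 = \<infinity>" using m1 by simp
    thus False using s by simp
  qed
  ultimately have "?C1 \<in> BB" "?C2 \<in> BB" using v_fin c1 c2 by blast+
  thus ?thesis using j le by blast
qed

lemma no_both: "B \<in> BB \<Longrightarrow> e \<in> B \<Longrightarrow> f \<in> B \<Longrightarrow> \<not> indep BB {e, f} \<Longrightarrow> False"
  unfolding indep_def by blast

lemma swap:
  assumes b: "B \<in> BB" and e: "e \<in> B" and fe: "f \<noteq> e" and dep: "\<not> indep BB {e, f}"
    and fi: "indep BB {f}"
  shows "f \<notin> B \<and> insert f (B - {e}) \<in> BB"
proof -
  have fB: "f \<notin> B" using no_both[OF b e _ dep] by blast
  obtain B0 where b0: "B0 \<in> BB" "f \<in> B0" using fi unfolding indep_def by blast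
  have eB0: "e \<notin> B0" using no_both[OF b0(1) _ b0(2) dep] by blast
  obtain j where j: "j \<in> B0 - B" "insert j (B - {e}) \<in> BB" "insert e (B0 - {j}) \<in> BB"
    using SE[OF b b0(1), of e] e eB0 by blast
  have "j = f"
  proof (rule ccontr)
    assume "j \<noteq> f"
    hence "f \<in> insert e (B0 - {j})" using b0 by auto
    thus False using no_both[OF j(3) _ _ dep] by blast
  qed
  thus ?thesis using fB j(2) by simp
qed

lemma const_le:
  assumes b1: "B1 \<in> BB" and b2: "B2 \<in> BB" and e1: "e \<in> B1" and e2: "e \<in> B2"
    and fe: "f \<noteq> e" and dep: "\<not> indep BB {e, f}" and fi: "indep BB {f}"
  shows "nu (insert f (B1 - {e})) + nu B2 \<le> nu B1 + nu (insert f (B2 - {e}))"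
proof -
  let ?B2' = "insert f (B2 - {e})"
  have sw2: "f \<notin> B2" "?B2' \<in> BB" using swap[OF b2 e2 fe dep fi] by simp_all
  have eB: "e \<in> B1 - ?B2'" using e1 fe by auto
  obtain j where j: "j \<in> ?B2' - B1" "insert e (?B2' - {j}) \<in> BB"
    and le: "nu (insert j (B1 - {e})) + nu (insert e (?B2' - {j})) \<le> nu B1 + nu ?B2'"
    using SE[OF b1 sw2(2) eB] by blast
  have "j = f"
  proof (rule ccontr)
    assume "j \<noteq> f"
    hence "f \<in> insert e (?B2' - {j})" by auto
    thus False using no_both[OF j(2) _ _ dep] by blast
  qed
  moreover have "insert e (?B2' - {f}) = B2" using sw2(1) e2 fe by auto
  ultimately show ?thesis using le by (simp add: add.commute)
qed

lemma const_eq: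
  assumes b1: "B1 \<in> BB" and b2: "B2 \<in> BB" and e1: "e \<in> B1" and e2: "e \<in> B2"
    and fe: "f \<noteq> e" and dep: "\<not> indep BB {e, f}" and fi: "indep BB {f}"
  shows "real_of_ereal (nu (insert f (B1 - {e}))) + real_of_ereal (nu B2)
       = real_of_ereal (nu B1) + real_of_ereal (nu (insert f (B2 - {e})))"
proof -
  have s1: "insert f (B1 - {e}) \<in> BB" and s2: "insert f (B2 - {e}) \<in> BB"
    using swap[OF b1 e1 fe dep fi] swap[OF b2 e2 fe dep fi] by simp_all
  have l1: "nu (insert f (B1 - {e})) + nu B2 \<le> nu B1 + nu (insert f (B2 - {e}))"
    using const_le[OF b1 b2 e1 e2 fe dep fi] .
  have l2: "nu (insert f (B2 - {e})) + nu B1 \<le> nu B2 + nu (insert f (B1 - {e}))"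
    using const_le[OF b2 b1 e2 e1 fe dep fi] .
  have l1': "ereal (real_of_ereal (nu (insert f (B1 - {e})))) + ereal (real_of_ereal (nu B2)) \<le> ereal (real_of_ereal (nu B1)) + ereal (real_of_ereal (nu (insert f (B2 - {e}))))"
    using l1 base_real[OF b1] base_real[OF b2] base_real[OF s1] base_real[OF s2] by simp
  have l2': "ereal (real_of_ereal (nu (insert f (B2 - {e})))) + ereal (real_of_ereal (nu B1)) \<le> ereal (real_of_ereal (nu B2)) + ereal (real_of_ereal (nu (insert f (B1 - {e}))))"
    using l2 base_real[OF b1] base_real[OF b2] base_real[OF s1] base_real[OF s2] by simp
  show ?thesis using l1' l2' by simp
qed

end

locale vmS = vm +
  fixes S :: "'a set"
  assumes simpS: "simplification_set E BB S"
begin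

lemma S_sub: "S \<subseteq> E" using simpS by (simp add: simplification_set_def)

lemma base_nonloop: "B \<in> BB \<Longrightarrow> x \<in> B \<Longrightarrow> indep BB {x}"
  unfolding indep_def by blast

lemma rep_ex:
  assumes b: "B \<in> BB" and x: "x \<in> B"
  shows "\<exists>f\<in>S. parallel E BB x f"
proof -
  have xE: "x \<in> E" using subE[OF b] x by blast
  have "\<not> is_loop E BB x" using base_nonloop[OF b x] by (simp add: is_loop_def)
  thus ?thesis using simpS xE unfolding simplification_set_def by blast
qed

lemma par_props:
  assumes "parallel E BB x f" "f \<noteq> x"
  shows "\<not> indep BB {x, f} \<and> indep BB {f}"
  using assms unfolding parallel_def is_loop_def by blast

lemma rep_ex2:
  assumes b: "B \<in> BB" and e: "e \<in> B" and eS: "e \<notin> S"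
  shows "\<exists>f. f \<in> S \<and> f \<noteq> e \<and> \<not> indep BB {e, f} \<and> indep BB {f}"
proof -
  obtain f where f: "f \<in> S" "parallel E BB e f" using rep_ex[OF b e] by blast
  have "f \<noteq> e" using f(1) eS by blast
  thus ?thesis using f par_props by blast
qed

lemma restr_iff: "I \<in> restrict_bases BB S \<longleftrightarrow> I \<in> BB \<and> I \<subseteq> S"
proof
  assume h: "I \<in> restrict_bases BB S"
  have IS: "I \<subseteq> S" and ii: "indep BB I"
    and mx: "\<And>J. I \<subset> J \<Longrightarrow> J \<subseteq> S \<Longrightarrow> \<not> indep BB J"
    using h unfolding restrict_bases_def by blast+
  obtain B where b: "B \<in> BB" "I \<subseteq> B" using ii unfolding indep_def by blast
  have "B \<subseteq> I"
  proof
    fix x assume x: "x \<in> B"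
    show "x \<in> I"
    proof (rule ccontr)
      assume xI: "x \<notin> I"
      obtain f where f: "f \<in> S" "parallel E BB x f" using rep_ex[OF b(1) x] by blast
      show False
      proof (cases "f = x")
        case True
        have "I \<subset> insert x I" using xI by blast
        moreover have "insert x I \<subseteq> S" using IS f(1) True by blast
        moreover have "indep BB (insert x I)" unfolding indep_def using b x by blast
        ultimately show False using mx by blast
      next
        case False
        have pp: "\<not> indep BB {x, f} \<and> indep BB {f}" using par_props[OF f(2) False] .
        have sw: "f \<notin> B \<and> insert f (B - {x}) \<in> BB"
          using swap[OF b(1) x False] pp by blast
        have "I \<subset> insert f I" using sw b(2) by blast
        moreover have "insert f I \<subseteq> S" using IS f(1) by blast
        moreover have "indep BB (insert f I)" unfolding indep_def
          using sw b(2) xI by (intro bexI[of _ "insert f (B - {x})"]) auto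
        ultimately show False using mx by blast
      qed
    qed
  qed
  hence "I = B" using b(2) by (rule equalityI[rotated])
  thus "I \<in> BB \<and> I \<subseteq> S" using b(1) IS by simp
next
  assume h: "I \<in> BB \<and> I \<subseteq> S"
  have "\<not> indep BB J" if J: "I \<subset> J" "J \<subseteq> S" for J
  proof
    assume "indep BB J"
    then obtain B2 where b2: "B2 \<in> BB" "J \<subseteq> B2" unfolding indep_def by blast
    have "card I < card J" using J finB[OF b2(1)] b2(2) by (meson finite_subset psubset_card_mono)
    also have "card J \<le> card B2" using b2 finB card_mono by blast
    also have "card B2 = card I" using equicard b2(1) h by blast
    finally show False by simp
  qed
  moreover have "indep BB I" using h unfolding indep_def by blast
  ultimately show "I \<in> restrict_bases BB S" using h unfolding restrict_bases_def by blast
qed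

lemma push: "\<forall>B\<in>BB. card (B - S) = n \<longrightarrow> (\<exists>B'\<in>BB. B' \<subseteq> S)"
proof (induction n)
  case 0
  show ?case
  proof (intro ballI impI)
    fix B assume b: "B \<in> BB" "card (B - S) = 0"
    hence "B \<subseteq> S" using finB[OF b(1)] by auto
    thus "\<exists>B'\<in>BB. B' \<subseteq> S" using b by blast
  qed
next
  case (Suc n)
  show ?case
  proof (intro ballI impI)
    fix B assume b: "B \<in> BB" "card (B - S) = Suc n"
    obtain e where e: "e \<in> B - S" using b(2) by (metis card.empty ex_in_conv nat.distinct(1))
    obtain f where f: "f \<in> S" "f \<noteq> e" "\<not> indep BB {e, f}" "indep BB {f}"
      using rep_ex2[OF b(1)] e by blast
    have sw: "f \<notin> B" "insert f (B - {e}) \<in> BB" using swap[OF b(1) _ f(2) f(3) f(4)] e by blast+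
    have "insert f (B - {e}) - S = (B - S) - {e}" using f(1) by blast
    hence "card (insert f (B - {e}) - S) = n" using b(2) e finB[OF b(1)] by simp
    thus "\<exists>B'\<in>BB. B' \<subseteq> S" using Suc.IH sw(2) by blast
  qed
qed

lemma S_base: "\<exists>B\<in>BB. B \<subseteq> S"
  using push nonemp by blast

lemma mrankS: "mrank (restrict_bases BB S) = d"
proof -
  have "restrict_bases BB S \<noteq> {}" using S_base restr_iff by blast
  hence "(SOME B. B \<in> restrict_bases BB S) \<in> restrict_bases BB S" by (simp add: some_in_eq)
  thus ?thesis unfolding mrank_def using restr_iff base_card by blast
qed

lemma valS: "valuation S (restrict_bases BB S) nu"
  unfolding valuation_def Let_def mrankS
proof (intro conjI)
  show "\<forall>B. B \<subseteq> S \<and> card B = d \<longrightarrow> nu B \<noteq> -\<infinity>"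
    using v_notminf S_sub by blast
  obtain B0 where b0: "B0 \<in> BB" "B0 \<subseteq> S" using S_base by blast
  have "nu B0 < \<infinity>" using v_fin[OF subE[OF b0(1)] base_card[OF b0(1)]] b0(1) by simp
  thus "\<exists>B. B \<subseteq> S \<and> card B = d \<and> nu B < \<infinity>" using b0 base_card by blast
  show "\<forall>B B'. B \<subseteq> S \<and> card B = d \<and> B' \<subseteq> S \<and> card B' = d \<longrightarrow>
        (\<forall>i\<in>B - B'. \<exists>j\<in>B' - B.
           nu B + nu B' \<ge> nu (insert j (B - {i})) + nu (insert i (B' - {j})))"
  proof (intro allI impI ballI)
    fix B B' i assume h: "B \<subseteq> S \<and> card B = d \<and> B' \<subseteq> S \<and> card B' = d" and i: "i \<in> B - B'"
    have "B \<subseteq> E" "B' \<subseteq> E" using h S_sub by blast+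
    thus "\<exists>j\<in>B' - B. nu B + nu B' \<ge> nu (insert j (B - {i})) + nu (insert i (B' - {j}))"
      using v_exch h i by blast
  qed
  show "\<forall>B. B \<subseteq> S \<and> card B = d \<longrightarrow> (nu B < \<infinity> \<longleftrightarrow> B \<in> restrict_bases BB S)"
  proof (intro allI impI)
    fix B assume h: "B \<subseteq> S \<and> card B = d"
    have "B \<subseteq> E" using h S_sub by blast
    thus "nu B < \<infinity> \<longleftrightarrow> B \<in> restrict_bases BB S" using v_fin h restr_iff by blast
  qed
qed

lemma final:
  assumes al: "\<forall>B\<in>restrict_bases BB S. nu B = ereal (sum \<alpha> B)"
  shows "trivial_valuation BB nu"
proof -
  define r where "r e = (SOME f. f \<in> S \<and> f \<noteq> e \<and> \<not> indep BB {e, f} \<and> indep BB {f})" for e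
  define X where "X e = (SOME X. X \<in> BB \<and> e \<in> X)" for e
  define c where "c e = real_of_ereal (nu (insert (r e) (X e - {e}))) - real_of_ereal (nu (X e))" for e
  define \<beta> where "\<beta> e = (if e \<in> S then \<alpha> e else \<alpha> (r e) - c e)" for e
  have key: "r e \<in> S \<and> r e \<noteq> e \<and> \<not> indep BB {e, r e} \<and> indep BB {r e}"
    if "B \<in> BB" "e \<in> B" "e \<notin> S" for B e
    unfolding r_def using someI_ex[OF rep_ex2[OF that]] .
  have keyX: "X e \<in> BB \<and> e \<in> X e" if "B \<in> BB" "e \<in> B" for B e
    unfolding X_def using that by (intro someI_ex[of "\<lambda>X. X \<in> BB \<and> e \<in> X"]) blast
  have ind: "\<forall>B\<in>BB. card (B - S) = n \<longrightarrow> nu B = ereal (sum \<beta> B)" for n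
  proof (induction n)
    case 0
    show ?case
    proof (intro ballI impI)
      fix B assume b: "B \<in> BB" "card (B - S) = 0"
      hence BS: "B \<subseteq> S" using finB[OF b(1)] by auto
      hence "nu B = ereal (sum \<alpha> B)" using al restr_iff b(1) by blast
      moreover have "sum \<alpha> B = sum \<beta> B" using BS unfolding \<beta>_def by (intro sum.cong) auto
      ultimately show "nu B = ereal (sum \<beta> B)" by simp
    qed
  next
    case (Suc n)
    show ?case
    proof (intro ballI impI)
      fix B assume b: "B \<in> BB" "card (B - S) = Suc n"
      obtain e where e: "e \<in> B" "e \<notin> S" using b(2) by (metis DiffE card.empty ex_in_conv nat.distinct(1))
      define f where "f = r e"
      have f: "f \<in> S" "f \<noteq> e" "\<not> indep BB {e, f}" "indep BB {f}"
        using key[OF b(1) e] unfolding f_def by blast+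
      have sw: "f \<notin> B" "insert f (B - {e}) \<in> BB" using swap[OF b(1) e(1) f(2) f(3) f(4)] by blast+
      define B' where "B' = insert f (B - {e})"
      have "B' - S = (B - S) - {e}" using f(1) unfolding B'_def by blast
      hence "card (B' - S) = n" using b(2) e finB[OF b(1)] by simp
      hence IH: "nu B' = ereal (sum \<beta> B')" using Suc.IH sw(2) unfolding B'_def by blast
      have fin: "finite B" using finB[OF b(1)] .
      have s1: "sum \<beta> B' = \<beta> f + sum \<beta> (B - {e})" unfolding B'_def using fin sw(1) by simp
      have s2: "sum \<beta> B = \<beta> e + sum \<beta> (B - {e})" using fin e(1) by (simp add: sum.remove)
      have be: "\<beta> e = \<alpha> f - c e" "\<beta> f = \<alpha> f" unfolding \<beta>_def f_def using e(2) f(1) f_def by auto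
      have sums: "sum \<beta> B' = sum \<beta> B + c e" using s1 s2 be by simp
      have kx: "X e \<in> BB" "e \<in> X e" using keyX[OF b(1) e(1)] by blast+
      have ce: "real_of_ereal (nu (insert f (X e - {e}))) + real_of_ereal (nu B)
          = real_of_ereal (nu (X e)) + real_of_ereal (nu B')"
        unfolding B'_def using const_eq[OF kx(1) b(1) kx(2) e(1) f(2) f(3) f(4)] .
      have cdef: "c e = real_of_ereal (nu (insert f (X e - {e}))) - real_of_ereal (nu (X e))"
        unfolding c_def f_def ..
      have "real_of_ereal (nu B') = sum \<beta> B'" using IH by simp
      hence "real_of_ereal (nu B) = sum \<beta> B" using ce cdef sums by simp
      thus "nu B = ereal (sum \<beta> B)" using base_real[OF b(1)] by simp
    qed
  qed
  show ?thesis unfolding trivial_valuation_def using ind by blast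
qed

end

theorem mainTheorem20:
  fixes E :: "'a set" and \<B> :: "'a set set" and S :: "'a set"
  assumes "matroid E \<B>"
    and "simplification_set E \<B> S"
    and "rigid S (restrict_bases \<B> S)"
  shows "rigid E \<B>"
  unfolding rigid_def
proof (intro allI impI)
  fix nu assume v: "valuation E \<B> nu"
  interpret vmS E \<B> nu S
    using assms(1,2) v by (simp add: vm_def vmS_def vmS_axioms_def)
  have "trivial_valuation (restrict_bases \<B> S) nu" using assms(3) valS unfolding rigid_def by blast
  then obtain \<alpha> :: "'a \<Rightarrow> real" where "\<forall>B\<in>restrict_bases \<B> S. nu B = ereal (sum \<alpha> B)"
    unfolding trivial_valuation_def by blast
  thus "trivial_valuation \<B> nu" using final by blast
qed

end
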